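(* Let $D$ be a derivation acting on monomials $x^\lambda y^\mu$ ($\lambda,\mu\in\mathbb C$) in two indeterminates $x,y$ and their linear combinations, satisfying Leibniz's rule and $D(x^\lambda y^\mu)=x^\lambda y^\mu\bigl(\lambda x^{-1}Dx+\mu y^{-1}Dy\bigr)$. Suppose $Dx=x^{1+\alpha}y^{\alpha'}$ and $Dy=x^{\alpha+\beta}y^{1+\alpha'+\beta'}$. Then for all $n\ge0$ and all $\gamma,\gamma'\in\mathbb C$, $$D^n\bigl(x^\gamma y^{\gamma'}\bigr)=x^\gamma y^{\gamma'}\,\bigl(x^\alpha y^{\alpha'}\bigr)^n\sum_{k=0}^n\left[\begin{array}{cc|c}\alpha,&\beta&\gamma\\ \alpha',&\beta'&\gamma'\end{array}\right]_{n,k}\bigl(x^\beta y^{\beta'}\bigr)^k,$$ i.e. $D^n(x^\gamma y^{\gamma'})=x^\gamma y^{\gamma'}(x^\alpha y^{\alpha'})^nG_n(x^\beta y^{\beta'})$ where $G_n$ is the $n$th row polynomial of this GKP triangle.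
   Context: GKP triangle: for complex parameters $\alpha,\beta,\gamma,\alpha',\beta',\gamma'$, the array $T_{n,k}=\left[\begin{array}{cc|c}\alpha,&\beta&\gamma\\ \alpha',&\beta'&\gamma'\end{array}\right]_{n,k}$ is defined by $T_{0,0}=1$, $T_{n,k}=0$ if $n<0$, $k<0$ or $k>n$, and $T_{n+1,k+1}=[\alpha n+\beta(k+1)+\gamma]T_{n,k+1}+[\alpha' n+\beta' k+\gamma']T_{n,k}$ for $n\ge0$, $k\in\mathbb Z$; its $n$th row polynomial is $G_n(t)=\sum_{k=0}^nT_{n,k}t^k$. *)

theory Defs
  imports Complex_Main "HOL-Library.Poly_Mapping" "HOL-Library.Product_Plus"
begin

text \<open>Generalized Laurent polynomials in two indeterminates x, y with complex exponents:
  finitely supported linear combinations of monomials x^l y^m (l, m complex), with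
  multiplication given by adding exponents (the group algebra of C x C over C).\<close>

type_synonym gpoly = "(complex \<times> complex) \<Rightarrow>\<^sub>0 complex"

definition xy :: "complex \<Rightarrow> complex \<Rightarrow> gpoly" where
  "xy l m = Poly_Mapping.single (l, m) 1"

definition cst :: "complex \<Rightarrow> gpoly" where
  "cst c = Poly_Mapping.single (0, 0) c"

text \<open>GKP triangle T_{n,k}; entries with k > n are 0 automatically, negative k excluded by nat.\<close>

fun gkp :: "complex \<Rightarrow> complex \<Rightarrow> complex \<Rightarrow> complex \<Rightarrow> complex \<Rightarrow> complex \<Rightarrow> nat \<Rightarrow> nat \<Rightarrow> complex" where
  "gkp a b c a' b' c' 0 k = (if k = 0 then 1 else 0)"
| "gkp a b c a' b' c' (Suc n) 0 = (a * of_nat n + c) * gkp a b c a' b' c' n 0"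
| "gkp a b c a' b' c' (Suc n) (Suc k) =
     (a * of_nat n + b * of_nat (Suc k) + c) * gkp a b c a' b' c' n (Suc k)
   + (a' * of_nat n + b' * of_nat k + c') * gkp a b c a' b' c' n k"

end

theory Submission
  imports Defs
begin

lemma gkp_zero: "k > n \<Longrightarrow> gkp a b c a' b' c' n k = 0"
proof (induction n arbitrary: k)
  case 0 then show ?case by simp
next
  case (Suc n)
  then obtain j where "k = Suc j" "j > n" by (cases k) auto
  then show ?case using Suc by simp
qed

lemma sgl_mult: "Poly_Mapping.single (a::complex,b::complex) (c::complex) * Poly_Mapping.single (a',b') c'
   = Poly_Mapping.single (a+a', b+b') (c*c')"
  by (simp add: mult_single)

lemma one_sgl: "Poly_Mapping.single (0::complex,0::complex) (1::complex) = 1"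
  by (metis zero_prod_def single_one)

lemma xy_pow: "xy a b ^ n = xy (of_nat n * a) (of_nat n * b)"
  by (induction n) (auto simp: xy_def sgl_mult algebra_simps one_sgl)

theorem mainTheorem19:
  fixes D :: "gpoly \<Rightarrow> gpoly"
    and \<alpha> \<beta> \<alpha>' \<beta>' :: complex
  assumes add: "\<And>f g. D (f + g) = D f + D g"
    and scal: "\<And>c f. D (cst c * f) = cst c * D f"
    and leibniz: "\<And>f g. D (f * g) = D f * g + f * D g"
    and mono_rule: "\<And>l m. D (xy l m) =
        xy l m * (cst l * xy (-1) 0 * D (xy 1 0) + cst m * xy 0 (-1) * D (xy 0 1))"
    and Dx: "D (xy 1 0) = xy (1 + \<alpha>) \<alpha>'"
    and Dy: "D (xy 0 1) = xy (\<alpha> + \<beta>) (1 + \<alpha>' + \<beta>')"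
  shows "\<forall>n::nat. \<forall>\<gamma> \<gamma>' :: complex.
    (D ^^ n) (xy \<gamma> \<gamma>') =
      xy \<gamma> \<gamma>' * (xy \<alpha> \<alpha>') ^ n *
      (\<Sum>k = 0..n. cst (gkp \<alpha> \<beta> \<gamma> \<alpha>' \<beta>' \<gamma>' n k) * (xy \<beta> \<beta>') ^ k)"
proof (intro allI)
  fix n :: nat and \<gamma> \<gamma>' :: complex
  have D0: "D 0 = 0" using add[of 0 0] by simp
  have Dsum: "D (sum f A) = (\<Sum>x\<in>A. D (f x))" if "finite A" for f and A :: "'z set"
    using that by (induction A rule: finite_induct) (auto simp: D0 add)
  have DS: "D (Poly_Mapping.single (a,b) c) =
     Poly_Mapping.single (a+\<alpha>, b+\<alpha>') (c*a) + Poly_Mapping.single (a+\<alpha>+\<beta>, b+\<alpha>'+\<beta>') (c*b)" for a b c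
  proof -
    have "Poly_Mapping.single (a,b) c = cst c * xy a b"
      by (simp add: cst_def xy_def sgl_mult)
    then have "D (Poly_Mapping.single (a,b) c) = cst c * D (xy a b)" using scal by simp
    also have "\<dots> = Poly_Mapping.single (a+\<alpha>, b+\<alpha>') (c*a) + Poly_Mapping.single (a+\<alpha>+\<beta>, b+\<alpha>'+\<beta>') (c*b)"
      unfolding mono_rule[of a b] Dx Dy unfolding cst_def xy_def
      apply (simp only: distrib_left mult.assoc[symmetric] sgl_mult)
      apply (simp add: algebra_simps)
      done
    finally show ?thesis .
  qed
  define T where "T n k = gkp \<alpha> \<beta> \<gamma> \<alpha>' \<beta>' \<gamma>' n k" for n k
  define P where "P n k c = Poly_Mapping.single (\<gamma> + of_nat n * \<alpha> + of_nat k * \<beta>, \<gamma>' + of_nat n * \<alpha>' + of_nat k * \<beta>') c" for n k :: nat and c :: complex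
  define S where "S n = (\<Sum>k\<le>n. P n k (T n k))" for n
  have Padd: "P n k (a + b) = P n k a + P n k b" for n k a b
    by (simp add: P_def single_add)
  have DP: "D (P n k c) = P (Suc n) k (c * (\<gamma> + of_nat n * \<alpha> + of_nat k * \<beta>))
      + P (Suc n) (Suc k) (c * (\<gamma>' + of_nat n * \<alpha>' + of_nat k * \<beta>'))" for n k c
    unfolding P_def DS by (simp add: algebra_simps)
  have step: "D (S n) = S (Suc n)" for n
  proof -
    have "D (S n) = (\<Sum>k\<le>n. P (Suc n) k (T n k * (\<gamma> + of_nat n * \<alpha> + of_nat k * \<beta>)))
       + (\<Sum>k\<le>n. P (Suc n) (Suc k) (T n k * (\<gamma>' + of_nat n * \<alpha>' + of_nat k * \<beta>')))"
      unfolding S_def by (simp add: Dsum DP sum.distrib)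
    also have "(\<Sum>k\<le>n. P (Suc n) k (T n k * (\<gamma> + of_nat n * \<alpha> + of_nat k * \<beta>)))
       = (\<Sum>k\<le>Suc n. P (Suc n) k (T n k * (\<gamma> + of_nat n * \<alpha> + of_nat k * \<beta>)))"
      by (simp add: T_def gkp_zero P_def)
    also have "\<dots> = P (Suc n) 0 (T n 0 * (\<gamma> + of_nat n * \<alpha>)) +
        (\<Sum>k\<le>n. P (Suc n) (Suc k) (T n (Suc k) * (\<gamma> + of_nat n * \<alpha> + of_nat (Suc k) * \<beta>)))"
      by (subst sum.atMost_Suc_shift) simp
    finally have "D (S n) = P (Suc n) 0 (T n 0 * (\<gamma> + of_nat n * \<alpha>)) +
        ((\<Sum>k\<le>n. P (Suc n) (Suc k) (T n (Suc k) * (\<gamma> + of_nat n * \<alpha> + of_nat (Suc k) * \<beta>)))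
        + (\<Sum>k\<le>n. P (Suc n) (Suc k) (T n k * (\<gamma>' + of_nat n * \<alpha>' + of_nat k * \<beta>'))))"
      by (simp add: add.assoc)
    also have "\<dots> = P (Suc n) 0 (T (Suc n) 0) + (\<Sum>k\<le>n. P (Suc n) (Suc k) (T (Suc n) (Suc k)))"
      by (simp add: sum.distrib[symmetric] Padd[symmetric] T_def algebra_simps)
    also have "\<dots> = S (Suc n)"
      unfolding S_def by (subst sum.atMost_Suc_shift) simp
    finally show ?thesis .
  qed
  have iter: "(D ^^ n) (xy \<gamma> \<gamma>') = S n"
  proof (induction n)
    case 0 then show ?case by (simp add: S_def P_def T_def xy_def)
  next
    case (Suc n) then show ?case by (simp add: step)
  qed
  have "xy \<gamma> \<gamma>' * (xy \<alpha> \<alpha>') ^ n *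
      (\<Sum>k = 0..n. cst (T n k) * (xy \<beta> \<beta>') ^ k) = S n"
    unfolding S_def atLeast0AtMost sum_distrib_left
    by (rule sum.cong) (simp_all only: xy_pow, simp add: xy_def cst_def sgl_mult P_def algebra_simps)
  then show "(D ^^ n) (xy \<gamma> \<gamma>') =
      xy \<gamma> \<gamma>' * (xy \<alpha> \<alpha>') ^ n *
      (\<Sum>k = 0..n. cst (gkp \<alpha> \<beta> \<gamma> \<alpha>' \<beta>' \<gamma>' n k) * (xy \<beta> \<beta>') ^ k)"
    using iter by (simp add: T_def)
qed

end
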